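(* Let $f:\{0,1\}^n\to\{0,1\}$ be a read-once DNF formula with $m$ terms, each containing exactly $n/m$ variables (so every variable occurs in exactly one term). Under unit costs ($c_i=1$ for all $i$) and an arbitrary probability vector $p\in(0,1)^n$, there is a non-adaptive strategy $S$ with $$\mathrm{cost}_{c,p}(f,S)\le \frac{n}{m}\cdot \mathsf{OPT}_{\mathcal A}(f,c,p).$$
   Context: Stochastic Boolean Function Evaluation (SBFE) setup: $f:\{0,1\}^n\to\{0,1\}$ is a known Boolean function, $c\in\mathbb{R}_{>0}^n$ a cost vector and $p\in(0,1)^n$ a probability vector. The unknown input $x\in\{0,1\}^n$ is random with independent coordinates and $\Pr(x_i=1)=p_i$. The value $x_i$ can only be learned by testing variable $i$, at cost $c_i$. A strategy tests variables sequentially until $f(x)$ is determined, i.e. until $f(x')=f(x)$ for every $x'$ agreeing with $x$ on all tested coordinates. An adaptive strategy is a decision tree (the next test may depend on previous outcomes); a non-adaptive strategy is a fixed permutation of $[n]$, with variables tested in that order until $f(x)$ is determined. $\mathrm{cost}_{c,p}(f,S)$ is the expected total cost of tests performed by $S$ for random $x$. $\mathsf{OPT}_{\mathcal A}(f,c,p)$ (resp. $\mathsf{OPT}_{\mathcal N}(f,c,p)$) is the minimum of $\mathrm{cost}_{c,p}(f,S)$ over all adaptive (resp. non-adaptive) strategies. A DNF formula is a disjunction of terms, each a conjunction of literals; it is read-once if no variable is negated and distinct terms contain disjoint sets of variables. *)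

theory Defs
  imports Complex_Main
begin

text \<open>Inputs in {0,1}^n are represented as functions nat \<Rightarrow> bool that are False
  outside {..<n}; a Boolean function is f :: (nat \<Rightarrow> bool) \<Rightarrow> bool, only
  its values on the cube matter.\<close>

definition cube :: "nat \<Rightarrow> (nat \<Rightarrow> bool) set" where
  "cube n = {x. \<forall>i. n \<le> i \<longrightarrow> \<not> x i}"

definition prob_input :: "nat \<Rightarrow> (nat \<Rightarrow> real) \<Rightarrow> (nat \<Rightarrow> bool) \<Rightarrow> real" where
  "prob_input n p x = (\<Prod>i<n. if x i then p i else 1 - p i)"

definition determined :: "nat \<Rightarrow> ((nat \<Rightarrow> bool) \<Rightarrow> bool) \<Rightarrow> nat set \<Rightarrow> (nat \<Rightarrow> bool) \<Rightarrow> bool" where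
  "determined n f S x \<longleftrightarrow> (\<forall>x' \<in> cube n. (\<forall>i\<in>S. x' i = x i) \<longrightarrow> f x' = f x)"

text \<open>Adaptive strategies: decision trees. Node i l r tests variable i, continues
  with l if x_i = 0 and with r if x_i = 1.\<close>
datatype dtree = Leaf | Node nat dtree dtree

fun tested :: "dtree \<Rightarrow> (nat \<Rightarrow> bool) \<Rightarrow> nat list" where
  "tested Leaf x = []"
| "tested (Node i l r) x = i # tested (if x i then r else l) x"

definition valid_tree :: "nat \<Rightarrow> ((nat \<Rightarrow> bool) \<Rightarrow> bool) \<Rightarrow> dtree \<Rightarrow> bool" where
  "valid_tree n f T \<longleftrightarrow> (\<forall>x \<in> cube n. set (tested T x) \<subseteq> {..<n}
       \<and> determined n f (set (tested T x)) x)"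

definition tree_cost :: "nat \<Rightarrow> (nat \<Rightarrow> real) \<Rightarrow> (nat \<Rightarrow> real) \<Rightarrow> dtree \<Rightarrow> real" where
  "tree_cost n c p T = (\<Sum>x\<in>cube n. prob_input n p x * sum_list (map c (tested T x)))"

definition OPT_A :: "nat \<Rightarrow> ((nat \<Rightarrow> bool) \<Rightarrow> bool) \<Rightarrow> (nat \<Rightarrow> real) \<Rightarrow> (nat \<Rightarrow> real) \<Rightarrow> real" where
  "OPT_A n f c p = Inf {tree_cost n c p T | T. valid_tree n f T}"

text \<open>Non-adaptive strategies: permutations of [n] given as lists; variables are
  tested in that order until f(x) is determined.\<close>
definition is_perm :: "nat \<Rightarrow> nat list \<Rightarrow> bool" where
  "is_perm n \<sigma> \<longleftrightarrow> distinct \<sigma> \<and> set \<sigma> = {..<n}"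

definition stop_time :: "nat \<Rightarrow> ((nat \<Rightarrow> bool) \<Rightarrow> bool) \<Rightarrow> nat list \<Rightarrow> (nat \<Rightarrow> bool) \<Rightarrow> nat" where
  "stop_time n f \<sigma> x = (LEAST t. determined n f (set (take t \<sigma>)) x)"

definition perm_cost :: "nat \<Rightarrow> ((nat \<Rightarrow> bool) \<Rightarrow> bool) \<Rightarrow> (nat \<Rightarrow> real) \<Rightarrow> (nat \<Rightarrow> real) \<Rightarrow> nat list \<Rightarrow> real" where
  "perm_cost n f c p \<sigma> = (\<Sum>x\<in>cube n. prob_input n p x *
       sum_list (map c (take (stop_time n f \<sigma> x) \<sigma>)))"

text \<open>Read-once DNF with m terms T 0, ..., T (m-1), each of exactly k variables,
  partitioning {..<n} (every variable occurs in exactly one term).\<close>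
definition read_once_dnf :: "nat \<Rightarrow> nat \<Rightarrow> (nat \<Rightarrow> nat set) \<Rightarrow> (nat \<Rightarrow> bool) \<Rightarrow> bool" where
  "read_once_dnf n m T x \<longleftrightarrow> (\<exists>j<m. \<forall>i\<in>T j. x i)"

end

theory Submission
  imports Defs
begin

definition Ex :: "nat \<Rightarrow> (nat \<Rightarrow> real) \<Rightarrow> ((nat \<Rightarrow> bool) \<Rightarrow> real) \<Rightarrow> real" where
  "Ex n p g = (\<Sum>x\<in>cube n. prob_input n p x * g x)"

lemma finite_cube: "finite (cube n)"
proof -
  have "cube n \<subseteq> (\<lambda>S i. i \<in> S) ` Pow {..<n}"
  proof
    fix x assume "x \<in> cube n"
    hence "{i. x i} \<subseteq> {..<n}" unfolding cube_def using not_le by auto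
    moreover have "x = (\<lambda>i. i \<in> {i. x i})" by auto
    ultimately show "x \<in> (\<lambda>S i. i \<in> S) ` Pow {..<n}" by blast
  qed
  thus ?thesis by (rule finite_subset) auto
qed

lemma prob_split:
  assumes "i < n"
  shows "prob_input n p x = p i * prob_input n (p(i:=1)) x + (1 - p i) * prob_input n (p(i:=0)) x"
proof -
  let ?R = "\<Prod>j\<in>{..<n}-{i}. (if x j then p j else 1 - p j)"
  have e: "prob_input n q x = (if x i then q i else 1 - q i) * (\<Prod>j\<in>{..<n}-{i}. (if x j then q j else 1 - q j))" for q
    unfolding prob_input_def using assms by (subst prod.remove[of _ i]) auto
  have r: "(\<Prod>j\<in>{..<n}-{i}. (if x j then (p(i:=c)) j else 1 - (p(i:=c)) j)) = ?R" for c
    by (rule prod.cong) auto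
  show ?thesis unfolding e[of p] e[of "p(i:=1)"] e[of "p(i:=0)"] r
    by (cases "x i") (auto simp: algebra_simps)
qed

lemma Ex_split:
  assumes "i < n"
  shows "Ex n p g = p i * Ex n (p(i:=1)) g + (1 - p i) * Ex n (p(i:=0)) g"
  unfolding Ex_def sum_distrib_left sum.distrib[symmetric]
  by (rule sum.cong) (auto simp: prob_split[OF assms, of p] algebra_simps)

lemma prob1_zero: "i < n \<Longrightarrow> \<not> x i \<Longrightarrow> prob_input n (p(i:=1)) x = 0"
  unfolding prob_input_def by (rule prod_zero) auto

lemma prob0_zero: "i < n \<Longrightarrow> x i \<Longrightarrow> prob_input n (p(i:=0)) x = 0"
  unfolding prob_input_def by (rule prod_zero) auto

lemma Ex_cong_supp:
  "(\<And>x. x \<in> cube n \<Longrightarrow> prob_input n p x \<noteq> 0 \<Longrightarrow> g x = h x) \<Longrightarrow> Ex n p g = Ex n p h"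
  unfolding Ex_def by (rule sum.cong) auto

lemma prob_nonneg: "(\<And>i. i < n \<Longrightarrow> 0 \<le> p i \<and> p i \<le> 1) \<Longrightarrow> 0 \<le> prob_input n p x"
  unfolding prob_input_def by (rule prod_nonneg) auto

lemma Ex_flip:
  assumes "i < n" and ind: "\<And>x b. g (x(i:=b)) = g x"
  shows "Ex n (p(i:=1)) g = Ex n (p(i:=0)) g"
  unfolding Ex_def
proof (rule sum.reindex_bij_witness[of _ "\<lambda>x. x(i:= \<not> x i)" "\<lambda>x. x(i:= \<not> x i)"], goal_cases)
  case (1 x) then show ?case by auto
next
  case (2 x) then show ?case using assms unfolding cube_def by auto
next
  case (3 x) then show ?case by auto
next
  case (4 x) then show ?case using assms unfolding cube_def by auto
next
  case (5 x)
  have "prob_input n (p(i := 0)) (x(i := \<not> x i)) = prob_input n (p(i := 1)) x"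
    unfolding prob_input_def by (rule prod.cong) auto
  thus ?case using ind by simp
qed

lemma Ex_upd:
  assumes "i < n" and ind: "\<And>x b. g (x(i:=b)) = g x"
  shows "Ex n (p(i:=c)) g = Ex n p g"
proof -
  have "Ex n (p(i:=c)) g = c * Ex n (p(i:=1)) g + (1 - c) * Ex n (p(i:=0)) g"
    using Ex_split[OF assms(1), of "p(i:=c)"] by simp
  moreover have "Ex n p g = p i * Ex n (p(i:=1)) g + (1 - p i) * Ex n (p(i:=0)) g"
    using Ex_split[OF assms(1)] .
  ultimately show ?thesis using Ex_flip[OF assms, of p] by (simp add: algebra_simps)
qed

lemma Ex_one: "Ex n p (\<lambda>_. 1) = 1"
proof -
  have "\<forall>S. finite S \<longrightarrow> S \<subseteq> {..<n} \<longrightarrow> Ex n p (\<lambda>_. 1) = Ex n (\<lambda>i. if i \<in> S then 0 else p i) (\<lambda>_. 1)"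
  proof (intro allI impI)
    fix S :: "nat set" assume "finite S" "S \<subseteq> {..<n}"
    thus "Ex n p (\<lambda>_. 1) = Ex n (\<lambda>i. if i \<in> S then 0 else p i) (\<lambda>_. 1)"
    proof (induction S rule: finite_induct)
      case empty then show ?case by simp
    next
      case (insert a S)
      have "(\<lambda>i. if i \<in> insert a S then 0 else p i) = (\<lambda>i. if i \<in> S then 0 else p i)(a := 0)"
        by auto
      then show ?case using insert Ex_upd[of a n "\<lambda>_. 1"] by simp
    qed
  qed
  hence "Ex n p (\<lambda>_. 1) = Ex n (\<lambda>i. if i \<in> {..<n} then 0 else p i) (\<lambda>_. 1)" by blast
  also have "\<dots> = (\<Sum>x\<in>cube n. if x = (\<lambda>_. False) then 1 else 0)"
    unfolding Ex_def
  proof (rule sum.cong)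
    fix x assume x: "x \<in> cube n"
    have "prob_input n (\<lambda>i. if i \<in> {..<n} then 0 else p i) x = (\<Prod>i<n. if x i then 0 else 1)"
      unfolding prob_input_def by (rule prod.cong) auto
    also have "\<dots> = (if x = (\<lambda>_. False) then 1 else 0)"
    proof (cases "x = (\<lambda>_. False)")
      case True then show ?thesis by simp
    next
      case False
      then obtain i where "x i" by auto
      with x have "i < n" unfolding cube_def using not_le by blast
      with \<open>x i\<close> False show ?thesis by (auto intro!: prod_zero)
    qed
    finally show "prob_input n (\<lambda>i. if i \<in> {..<n} then 0 else p i) x * 1 = (if x = (\<lambda>_. False) then 1 else 0)"
      by simp
  qed simp
  also have "\<dots> = 1" using finite_cube[of n] by (simp add: cube_def)
  finally show ?thesis .
qed

lemma Ex_prod: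
  assumes "finite S" "S \<subseteq> {..<n}" and ind: "\<And>i x b. i \<in> S \<Longrightarrow> g (x(i:=b)) = g x"
  shows "Ex n p (\<lambda>x. g x * (if \<forall>i\<in>S. x i then 1 else 0)) = (\<Prod>i\<in>S. p i) * Ex n p g"
  using assms
proof (induction S arbitrary: p rule: finite_induct)
  case empty then show ?case by simp
next
  case (insert a S)
  have a: "a < n" using insert by auto
  let ?h = "\<lambda>x. g x * (if \<forall>i\<in>insert a S. x i then 1 else 0)"
  have "Ex n p ?h = p a * Ex n (p(a:=1)) ?h + (1 - p a) * Ex n (p(a:=0)) ?h"
    by (rule Ex_split[OF a])
  moreover have "Ex n (p(a:=0)) ?h = Ex n (p(a:=0)) (\<lambda>_. 0)"
    by (rule Ex_cong_supp) (use prob0_zero[OF a] in auto)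
  moreover have "Ex n (p(a:=1)) ?h = Ex n (p(a:=1)) (\<lambda>x. g x * (if \<forall>i\<in>S. x i then 1 else 0))"
    by (rule Ex_cong_supp) (use prob1_zero[OF a] in auto)
  moreover have "Ex n (p(a:=1)) (\<lambda>x. g x * (if \<forall>i\<in>S. x i then 1 else 0)) = (\<Prod>i\<in>S. (p(a:=1)) i) * Ex n (p(a:=1)) g"
    using insert by auto
  moreover have "(\<Prod>i\<in>S. (p(a:=1)) i) = (\<Prod>i\<in>S. p i)"
    using insert by (intro prod.cong) auto
  moreover have "Ex n (p(a:=1)) g = Ex n p g"
    by (rule Ex_upd[OF a]) (rule insert.prems(2), simp)
  ultimately show ?case using insert by (simp add: Ex_def)
qed

lemma Ex_add: "Ex n p (\<lambda>x. f x + g x) = Ex n p f + Ex n p g"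
  unfolding Ex_def by (simp add: algebra_simps sum.distrib)
lemma Ex_diff: "Ex n p (\<lambda>x. f x - g x) = Ex n p f - Ex n p g"
  unfolding Ex_def by (simp add: algebra_simps sum_subtractf)
lemma Ex_cmult: "Ex n p (\<lambda>x. c * f x) = c * Ex n p f"
  unfolding Ex_def by (simp add: algebra_simps sum_distrib_left)
lemma Ex_mono: "(\<And>i. i < n \<Longrightarrow> 0 \<le> p i \<and> p i \<le> 1) \<Longrightarrow> (\<And>x. x \<in> cube n \<Longrightarrow> f x \<le> g x) \<Longrightarrow> Ex n p f \<le> Ex n p g"
  unfolding Ex_def by (intro sum_mono mult_left_mono) (auto simp: prob_nonneg)

lemma sum_list_ones: "sum_list (map (\<lambda>_. 1::real) xs) = real (length xs)"
  by (induction xs) auto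

fun fulltree :: "nat list \<Rightarrow> dtree" where
  "fulltree [] = Leaf"
| "fulltree (i # is) = Node i (fulltree is) (fulltree is)"

lemma tested_fulltree: "tested (fulltree xs) x = xs"
  by (induction xs) auto

lemma cube_eq: "x \<in> cube n \<Longrightarrow> x' \<in> cube n \<Longrightarrow> (\<forall>i\<in>{..<n}. x' i = x i) \<Longrightarrow> x' = x"
proof (rule ext)
  fix i assume a: "x \<in> cube n" "x' \<in> cube n" "\<forall>i\<in>{..<n}. x' i = x i"
  show "x' i = x i"
  proof (cases "i < n")
    case True then show ?thesis using a by simp
  next
    case False then show ?thesis using a unfolding cube_def by simp
  qed
qed

locale sb =
  fixes n m k :: nat and T :: "nat \<Rightarrow> nat set" and p0 :: "nat \<Rightarrow> real"
  assumes m_pos: "m > 0" and n_eq: "n = m * k"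
    and cardT: "\<And>j. j < m \<Longrightarrow> card (T j) = k"
    and disj: "\<And>j j'. j < m \<Longrightarrow> j' < m \<Longrightarrow> j \<noteq> j' \<Longrightarrow> T j \<inter> T j' = {}"
    and union: "(\<Union>j<m. T j) = {..<n}"
    and p0_range: "\<And>i. i < n \<Longrightarrow> 0 < p0 i \<and> p0 i < 1"
    and k_pos: "k > 0"
begin

abbreviation F where "F \<equiv> read_once_dnf n m T"

definition sat :: "nat \<Rightarrow> (nat \<Rightarrow> bool) \<Rightarrow> bool" where
  "sat j x \<longleftrightarrow> (\<forall>i\<in>T j. x i)"

definition q :: "nat \<Rightarrow> real" where
  "q j = (\<Prod>i\<in>T j. p0 i)"

fun Wl :: "nat list \<Rightarrow> real" where
  "Wl [] = 0"
| "Wl (a # xs) = 1 + (1 - q a) * Wl xs"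

definition \<pi> :: "nat list" where
  "\<pi> = sort_key (\<lambda>j. - q j) [0..<m]"

definition W :: "nat set \<Rightarrow> real" where
  "W U = Wl (filter (\<lambda>j. j \<notin> U) \<pi>)"

definition Aev :: "nat set \<Rightarrow> (nat \<Rightarrow> bool) \<Rightarrow> real" where
  "Aev U x = (if \<forall>j\<in>U. \<not> sat j x then 1 else 0)"

definition tt :: "nat list \<Rightarrow> nat set" where
  "tt l = {j. j < m \<and> (\<exists>i\<in>set l. i \<in> T j)}"

definition termof :: "nat \<Rightarrow> nat" where
  "termof i = (THE j. j < m \<and> i \<in> T j)"

lemma T_sub: "j < m \<Longrightarrow> T j \<subseteq> {..<n}"
proof -
  assume "j < m"
  hence "T j \<subseteq> (\<Union>j<m. T j)" by blast
  thus ?thesis using union by simp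
qed

lemma T_fin: "j < m \<Longrightarrow> finite (T j)"
  by (rule finite_subset[OF T_sub]) auto

lemma T_ne: "j < m \<Longrightarrow> T j \<noteq> {}"
  using cardT[of j] k_pos by auto

lemma termof: "i < n \<Longrightarrow> termof i < m \<and> i \<in> T (termof i)"
proof -
  assume "i < n"
  then obtain j where j: "j < m" "i \<in> T j" using union by blast
  have "\<exists>!j. j < m \<and> i \<in> T j"
  proof (rule ex1I[of _ j])
    show "j < m \<and> i \<in> T j" using j by simp
    fix j' assume "j' < m \<and> i \<in> T j'"
    thus "j' = j" using disj[of j j'] j by blast
  qed
  thus ?thesis unfolding termof_def by (rule theI')
qed

lemma termof_unique: "j < m \<Longrightarrow> i \<in> T j \<Longrightarrow> termof i = j"
proof -
  assume j: "j < m" "i \<in> T j"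
  hence "i < n" using T_sub by blast
  hence "termof i < m" "i \<in> T (termof i)" using termof by auto
  thus ?thesis using disj[of j "termof i"] j by (cases "termof i = j") auto
qed

lemma q_range: "j < m \<Longrightarrow> 0 \<le> q j \<and> q j \<le> 1"
proof -
  assume j: "j < m"
  have "\<forall>i\<in>T j. 0 \<le> p0 i \<and> p0 i \<le> 1" using T_sub[OF j] p0_range by force
  thus ?thesis unfolding q_def by (auto intro: prod_nonneg prod_le_1)
qed

lemma Wl_nonneg: "set xs \<subseteq> {..<m} \<Longrightarrow> 0 \<le> Wl xs"
  by (induction xs) (auto intro!: add_nonneg_nonneg mult_nonneg_nonneg dest: q_range)

lemma Wl_exchange:
  "sorted_wrt (\<lambda>a b. q b \<le> q a) xs \<Longrightarrow> set xs \<subseteq> {..<m} \<Longrightarrow> j \<in> set xs \<Longrightarrow>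
   Wl xs \<le> 1 + (1 - q j) * Wl (remove1 j xs)"
proof (induction xs)
  case Nil then show ?case by simp
next
  case (Cons a ys)
  show ?case
  proof (cases "a = j")
    case True then show ?thesis by simp
  next
    case False
    hence jy: "j \<in> set ys" using Cons by auto
    have qa: "q j \<le> q a" using Cons jy by auto
    have ih: "Wl ys \<le> 1 + (1 - q j) * Wl (remove1 j ys)" using Cons jy by auto
    have ra: "0 \<le> 1 - q a" "0 \<le> 1 - q j" using q_range Cons by auto
    have X: "0 \<le> Wl (remove1 j ys)" using Cons by (intro Wl_nonneg) (use set_remove1_subset[of j ys] in auto)
    have "Wl (a # ys) \<le> 1 + (1 - q a) * (1 + (1 - q j) * Wl (remove1 j ys))"
      using ih ra by (simp add: mult_left_mono)
    also have "\<dots> = 1 + (1 - q a) + (1 - q a) * (1 - q j) * Wl (remove1 j ys)"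
      by (simp add: algebra_simps)
    also have "\<dots> \<le> 1 + (1 - q j) + (1 - q a) * (1 - q j) * Wl (remove1 j ys)"
      using qa by simp
    also have "\<dots> = 1 + (1 - q j) * (1 + (1 - q a) * Wl (remove1 j ys))"
      by (simp add: algebra_simps)
    finally show ?thesis using False by simp
  qed
qed

lemma pi_props: "distinct \<pi>" "set \<pi> = {..<m}" "sorted_wrt (\<lambda>a b. q b \<le> q a) \<pi>"
proof -
  show "distinct \<pi>" unfolding \<pi>_def by simp
  show "set \<pi> = {..<m}" unfolding \<pi>_def by auto
  have "sorted (map (\<lambda>j. - q j) \<pi>)" unfolding \<pi>_def by (rule sorted_sort_key)
  thus "sorted_wrt (\<lambda>a b. q b \<le> q a) \<pi>" by (simp add: sorted_map)
qed

lemma Aev_indep: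
  assumes j: "j < m" "j \<notin> U" and U: "U \<subseteq> {..<m}" and pj: "\<forall>i\<in>T j. p i = p0 i"
  shows "Ex n p (Aev (insert j U)) = Ex n p (Aev U) * (1 - q j)"
proof -
  have pw: "Aev (insert j U) x = Aev U x - Aev U x * (if \<forall>i\<in>T j. x i then 1 else 0)" for x
    unfolding Aev_def sat_def by auto
  have ind: "Aev U (x(i:=b)) = Aev U x" if "i \<in> T j" for i x b
  proof -
    have "sat j' (x(i:=b)) = sat j' x" if "j' \<in> U" for j'
    proof -
      have "i \<notin> T j'" using disj[of j j'] j U \<open>j' \<in> U\<close> \<open>i \<in> T j\<close> by auto
      thus ?thesis unfolding sat_def by auto
    qed
    thus ?thesis unfolding Aev_def by simp
  qed
  have "Ex n p (Aev (insert j U)) = Ex n p (Aev U) - Ex n p (\<lambda>x. Aev U x * (if \<forall>i\<in>T j. x i then 1 else 0))"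
    unfolding pw Ex_diff ..
  also have "Ex n p (\<lambda>x. Aev U x * (if \<forall>i\<in>T j. x i then 1 else 0)) = (\<Prod>i\<in>T j. p i) * Ex n p (Aev U)"
    by (rule Ex_prod[OF T_fin[OF j(1)] T_sub[OF j(1)]]) (rule ind)
  also have "(\<Prod>i\<in>T j. p i) = q j" unfolding q_def using pj by (intro prod.cong) auto
  finally show ?thesis by (simp add: algebra_simps)
qed

lemma tt_Cons: "j < m \<Longrightarrow> i \<in> T j \<Longrightarrow> tt (i # l) = insert j (tt l)"
  unfolding tt_def using disj by auto

lemma tt_Nil: "tt [] = {}" unfolding tt_def by auto

lemma card_tt: "set l \<subseteq> {..<n} \<Longrightarrow> card (tt l) \<le> length l"
proof -
  assume l: "set l \<subseteq> {..<n}"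
  have "tt l \<subseteq> termof ` set l"
  proof
    fix j assume "j \<in> tt l"
    then obtain i where "j < m" "i \<in> set l" "i \<in> T j" unfolding tt_def by auto
    thus "j \<in> termof ` set l" using termof_unique by force
  qed
  hence "card (tt l) \<le> card (termof ` set l)" by (intro card_mono) auto
  also have "\<dots> \<le> card (set l)" by (rule card_image_le) simp
  also have "\<dots> \<le> length l" by (rule card_length)
  finally show ?thesis .
qed

lemma Aev_range: "(\<And>i. i < n \<Longrightarrow> 0 \<le> p i \<and> p i \<le> 1) \<Longrightarrow> 0 \<le> Ex n p (Aev U) \<and> Ex n p (Aev U) \<le> 1"
proof -
  assume p: "\<And>i. i < n \<Longrightarrow> 0 \<le> p i \<and> p i \<le> 1"
  have "Ex n p (\<lambda>_. 0) \<le> Ex n p (Aev U)" by (rule Ex_mono[OF p]) (auto simp: Aev_def)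
  moreover have "Ex n p (Aev U) \<le> Ex n p (\<lambda>_. 1)" by (rule Ex_mono[OF p]) (auto simp: Aev_def)
  ultimately show ?thesis by (simp add: Ex_one Ex_def)
qed

lemma leaf_zero:
  assumes U: "U \<subseteq> {..<m}" "D \<subseteq> (\<Union>j\<in>U. T j)" and j0: "j0 < m" "j0 \<notin> U"
    and x: "x \<in> cube n" "determined n F D x"
  shows "\<exists>j\<in>U. sat j x"
proof (rule ccontr)
  assume nu: "\<not> (\<exists>j\<in>U. sat j x)"
  have Dout: "i \<notin> T j" if h: "i \<in> D" "j < m" "j \<notin> U" for i j
  proof -
    obtain j' where "j' \<in> U" "i \<in> T j'" using U h by blast
    thus ?thesis using disj[of j j'] U h by auto
  qed
  define x1 where "x1 = (\<lambda>i. if i \<in> T j0 then True else x i)"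
  define x2 where "x2 = (\<lambda>i. if (\<exists>j<m. j \<notin> U \<and> i \<in> T j) then False else x i)"
  have x1c: "x1 \<in> cube n" using x(1) T_sub[OF j0(1)] unfolding cube_def x1_def by auto
  have x2c: "x2 \<in> cube n" using x(1) unfolding cube_def x2_def by auto
  have x1D: "\<forall>i\<in>D. x1 i = x i" using Dout j0 unfolding x1_def by auto
  have x2D: "\<forall>i\<in>D. x2 i = x i" using Dout unfolding x2_def by auto
  have F1: "F x1" unfolding read_once_dnf_def x1_def using j0 by auto
  have F2: "\<not> F x2"
    unfolding read_once_dnf_def
  proof (intro notI, elim exE conjE)
    fix j assume j: "j < m" "\<forall>i\<in>T j. x2 i"
    show False
    proof (cases "j \<in> U")
      case True
      have "\<forall>i\<in>T j. x2 i = x i"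
      proof
        fix i assume "i \<in> T j"
        hence "\<not> (\<exists>j'<m. j' \<notin> U \<and> i \<in> T j')" using disj[of j] j True by blast
        thus "x2 i = x i" unfolding x2_def by (rule if_not_P)
      qed
      hence "sat j x" using j unfolding sat_def by auto
      thus False using nu True by auto
    next
      case False
      obtain i where "i \<in> T j" using T_ne[OF j(1)] by auto
      hence "\<not> x2 i" unfolding x2_def using j False by auto
      thus False using j \<open>i \<in> T j\<close> by auto
    qed
  qed
  have "F x1 = F x" using x(2) x1c x1D unfolding determined_def by blast
  moreover have "F x2 = F x" using x(2) x2c x2D unfolding determined_def by blast
  ultimately show False using F1 F2 by simp
qed

lemma main:
  assumes "\<And>i. i < n \<Longrightarrow> 0 \<le> p i \<and> p i \<le> 1"
    and "\<And>j i. j < m \<Longrightarrow> j \<notin> U \<Longrightarrow> i \<in> T j \<Longrightarrow> p i = p0 i"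
    and "U \<subseteq> {..<m}" and "D \<subseteq> (\<Union>j\<in>U. T j)"
    and "\<And>x. x \<in> cube n \<Longrightarrow> prob_input n p x \<noteq> 0 \<Longrightarrow>
           set (tested tr x) \<subseteq> {..<n} \<and> determined n F (D \<union> set (tested tr x)) x"
  shows "Ex n p (Aev U) * W U \<le> Ex n p (\<lambda>x. real (card (tt (tested tr x) - U)))"
  using assms
proof (induction tr arbitrary: p U D)
  case Leaf
  show ?case
  proof (cases "filter (\<lambda>j. j \<notin> U) \<pi> = []")
    case True then show ?thesis by (simp add: W_def Ex_def tt_Nil)
  next
    case False
    then obtain j0 where "j0 \<in> set \<pi>" "j0 \<notin> U" by (auto simp: filter_empty_conv)
    hence j0: "j0 < m" "j0 \<notin> U" using pi_props by auto
    have "Ex n p (Aev U) = Ex n p (\<lambda>_. 0)"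
    proof (rule Ex_cong_supp)
      fix x assume "x \<in> cube n" "prob_input n p x \<noteq> 0"
      hence "determined n F D x" using Leaf.prems(5) by simp
      hence "\<exists>j\<in>U. sat j x" using leaf_zero[OF Leaf.prems(3,4) j0 \<open>x \<in> cube n\<close>] by simp
      thus "Aev U x = 0" unfolding Aev_def by auto
    qed
    thus ?thesis by (simp add: Ex_def tt_Nil)
  qed
next
  case (Node i l r)
  show ?case
  proof (cases "\<exists>x\<in>cube n. prob_input n p x \<noteq> 0")
    case False
    then show ?thesis by (simp add: Ex_def)
  next
    case True
    then obtain x0 where "x0 \<in> cube n" "prob_input n p x0 \<noteq> 0" by blast
    hence i: "i < n" using Node.prems(5)[of x0] by auto
    define j where "j = termof i"
    have j: "j < m" "i \<in> T j" using termof[OF i] j_def by auto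
    define pa where "pa = p(i:=1)"
    define pb where "pb = p(i:=0)"
    have pr: "\<And>i. i < n \<Longrightarrow> 0 \<le> p i \<and> p i \<le> 1" by (rule Node.prems(1))
    have par: "\<And>i'. i' < n \<Longrightarrow> 0 \<le> pa i' \<and> pa i' \<le> 1" using pr unfolding pa_def by auto
    have pbr: "\<And>i'. i' < n \<Longrightarrow> 0 \<le> pb i' \<and> pb i' \<le> 1" using pr unfolding pb_def by auto
    let ?G = "\<lambda>x. real (card (tt (tested (Node i l r) x) - U))"
    have split: "Ex n p ?G = p i * Ex n pa ?G + (1 - p i) * Ex n pb ?G"
      unfolding pa_def pb_def by (rule Ex_split[OF i])
    have Aspl: "Ex n p (Aev U) = p i * Ex n pa (Aev U) + (1 - p i) * Ex n pb (Aev U)"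
      unfolding pa_def pb_def by (rule Ex_split[OF i])
    have Ga: "Ex n pa ?G = Ex n pa (\<lambda>x. real (card (insert j (tt (tested r x)) - U)))"
    proof (rule Ex_cong_supp)
      fix x assume "x \<in> cube n" "prob_input n pa x \<noteq> 0"
      hence "x i" using prob1_zero[OF i] unfolding pa_def by blast
      thus "?G x = real (card (insert j (tt (tested r x)) - U))" using tt_Cons[OF j] by simp
    qed
    have Gb: "Ex n pb ?G = Ex n pb (\<lambda>x. real (card (insert j (tt (tested l x)) - U)))"
    proof (rule Ex_cong_supp)
      fix x assume "x \<in> cube n" "prob_input n pb x \<noteq> 0"
      hence "\<not> x i" using prob0_zero[OF i] unfolding pb_def by blast
      thus "?G x = real (card (insert j (tt (tested l x)) - U))" using tt_Cons[OF j] by simp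
    qed
    have va: "set (tested r x) \<subseteq> {..<n} \<and> determined n F (insert i D \<union> set (tested r x)) x"
      if "p i \<noteq> 0" "x \<in> cube n" "prob_input n pa x \<noteq> 0" for x
    proof -
      have xi: "x i" using prob1_zero[OF i] that unfolding pa_def by blast
      have "prob_input n p x = p i * prob_input n pa x"
        using prob_split[OF i, of p x] prob0_zero[of i n x p, OF i xi] unfolding pa_def by simp
      hence "prob_input n p x \<noteq> 0" using that by simp
      thus ?thesis using Node.prems(5)[OF that(2)] xi by auto
    qed
    have vb: "set (tested l x) \<subseteq> {..<n} \<and> determined n F (insert i D \<union> set (tested l x)) x"
      if "1 - p i \<noteq> 0" "x \<in> cube n" "prob_input n pb x \<noteq> 0" for x
    proof -
      have xi: "\<not> x i" using prob0_zero[OF i] that unfolding pb_def by blast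
      have "prob_input n p x = (1 - p i) * prob_input n pb x"
        using prob_split[OF i, of p x] prob1_zero[of i n x p, OF i xi] unfolding pb_def by simp
      hence "prob_input n p x \<noteq> 0" using that by simp
      thus ?thesis using Node.prems(5)[OF that(2)] xi by auto
    qed
    have pir: "0 \<le> p i" "0 \<le> 1 - p i" using pr[OF i] by auto
    show ?thesis
    proof (cases "j \<in> U")
      case True
      have D': "insert i D \<subseteq> (\<Union>j\<in>U. T j)" using Node.prems(4) True j by auto
      have pa0: "pa i' = p0 i'" if "j' < m" "j' \<notin> U" "i' \<in> T j'" for j' i'
      proof -
        have "i' \<noteq> i" using disj[of j j'] that j True by auto
        thus ?thesis using Node.prems(2)[OF that] unfolding pa_def by simp
      qed
      have pb0: "pb i' = p0 i'" if "j' < m" "j' \<notin> U" "i' \<in> T j'" for j' i'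
      proof -
        have "i' \<noteq> i" using disj[of j j'] that j True by auto
        thus ?thesis using Node.prems(2)[OF that] unfolding pb_def by simp
      qed
      have ca: "\<And>A. insert j A - U = A - U" using True by auto
      have IHa: "p i * (Ex n pa (Aev U) * W U) \<le> p i * Ex n pa ?G"
      proof (cases "p i = 0")
        case True then show ?thesis by simp
      next
        case False
        have "Ex n pa (Aev U) * W U \<le> Ex n pa (\<lambda>x. real (card (tt (tested r x) - U)))"
          by (rule Node.IH(2)[of pa U "insert i D"]) (use par pa0 Node.prems(3) D' va[OF False] in auto)
        thus ?thesis unfolding Ga ca using pir by (intro mult_left_mono) auto
      qed
      have IHb: "(1 - p i) * (Ex n pb (Aev U) * W U) \<le> (1 - p i) * Ex n pb ?G"
      proof (cases "1 - p i = 0")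
        case True then show ?thesis by simp
      next
        case False
        have "Ex n pb (Aev U) * W U \<le> Ex n pb (\<lambda>x. real (card (tt (tested l x) - U)))"
          by (rule Node.IH(1)[of pb U "insert i D"]) (use pbr pb0 Node.prems(3) D' vb[OF False] in auto)
        thus ?thesis unfolding Gb ca using pir by (intro mult_left_mono) auto
      qed
      show ?thesis unfolding split Aspl using IHa IHb by (simp add: algebra_simps)
    next
      case False
      let ?U = "insert j U"
      have D': "insert i D \<subseteq> (\<Union>j\<in>?U. T j)" using Node.prems(4) j by auto
      have pa0: "pa i' = p0 i'" if "j' < m" "j' \<notin> ?U" "i' \<in> T j'" for j' i'
      proof -
        have "i' \<noteq> i" using disj[of j j'] that j by auto
        thus ?thesis using Node.prems(2)[of j' i'] that unfolding pa_def by simp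
      qed
      have pb0: "pb i' = p0 i'" if "j' < m" "j' \<notin> ?U" "i' \<in> T j'" for j' i'
      proof -
        have "i' \<noteq> i" using disj[of j j'] that j by auto
        thus ?thesis using Node.prems(2)[of j' i'] that unfolding pb_def by simp
      qed
      have U': "?U \<subseteq> {..<m}" using Node.prems(3) j by auto
      have ca: "real (card (insert j (tt l') - U)) = 1 + real (card (tt l' - ?U))" for l'
      proof -
        have fin: "finite (tt l' - ?U)" unfolding tt_def by (rule finite_subset[of _ "{..<m}"]) auto
        have "insert j (tt l') - U = insert j (tt l' - ?U)" using False by auto
        thus ?thesis using fin by simp
      qed
      let ?H = "\<lambda>tr x. real (card (tt (tested tr x) - ?U))"
      have IHa: "p i * (Ex n pa (Aev ?U) * W ?U) \<le> p i * Ex n pa (?H r)"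
      proof (cases "p i = 0")
        case True then show ?thesis by simp
      next
        case False
        have "Ex n pa (Aev ?U) * W ?U \<le> Ex n pa (?H r)"
          by (rule Node.IH(2)[of pa ?U "insert i D"]) (use par pa0 U' D' va[OF False] in auto)
        thus ?thesis using pir by (intro mult_left_mono) auto
      qed
      have IHb: "(1 - p i) * (Ex n pb (Aev ?U) * W ?U) \<le> (1 - p i) * Ex n pb (?H l)"
      proof (cases "1 - p i = 0")
        case True then show ?thesis by simp
      next
        case False
        have "Ex n pb (Aev ?U) * W ?U \<le> Ex n pb (?H l)"
          by (rule Node.IH(1)[of pb ?U "insert i D"]) (use pbr pb0 U' D' vb[OF False] in auto)
        thus ?thesis using pir by (intro mult_left_mono) auto
      qed
      have Ea: "Ex n pa ?G = 1 + Ex n pa (?H r)"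
        unfolding Ga ca Ex_add Ex_one ..
      have Eb: "Ex n pb ?G = 1 + Ex n pb (?H l)"
        unfolding Gb ca Ex_add Ex_one ..
      have "Ex n p (Aev ?U) * W ?U = p i * (Ex n pa (Aev ?U) * W ?U) + (1 - p i) * (Ex n pb (Aev ?U) * W ?U)"
      proof -
        have e: "Ex n p (Aev ?U) = p i * Ex n pa (Aev ?U) + (1 - p i) * Ex n pb (Aev ?U)"
          unfolding pa_def pb_def by (rule Ex_split[OF i])
        show ?thesis unfolding e by (simp add: algebra_simps)
      qed
      also have "\<dots> \<le> p i * Ex n pa (?H r) + (1 - p i) * Ex n pb (?H l)"
        using IHa IHb by (rule add_mono)
      finally have "Ex n p (Aev ?U) * W ?U \<le> p i * Ex n pa (?H r) + (1 - p i) * Ex n pb (?H l)" .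
      hence low: "1 + Ex n p (Aev ?U) * W ?U \<le> Ex n p ?G"
        unfolding split Ea Eb by (simp add: algebra_simps)
      have pj: "\<forall>i'\<in>T j. p i' = p0 i'" using Node.prems(2)[of j] j False by auto
      have ind: "Ex n p (Aev ?U) = Ex n p (Aev U) * (1 - q j)"
        by (rule Aev_indep[OF j(1) False Node.prems(3) pj])
      have fl: "filter (\<lambda>j'. j' \<notin> ?U) \<pi> = remove1 j (filter (\<lambda>j'. j' \<notin> U) \<pi>)"
      proof -
        have "distinct (filter (\<lambda>j'. j' \<notin> U) \<pi>)" using pi_props by simp
        hence "remove1 j (filter (\<lambda>j'. j' \<notin> U) \<pi>) = removeAll j (filter (\<lambda>j'. j' \<notin> U) \<pi>)"
          by (rule distinct_remove1_removeAll)
        moreover have "removeAll j (filter (\<lambda>j'. j' \<notin> U) xs) = filter (\<lambda>j'. j' \<notin> ?U) xs" for xs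
          by (induction xs) auto
        ultimately show ?thesis by simp
      qed
      have ex: "W U \<le> 1 + (1 - q j) * W ?U"
        unfolding W_def fl
        by (rule Wl_exchange) (use pi_props j False in \<open>auto intro: sorted_wrt_filter\<close>)
      have WU': "0 \<le> W ?U" unfolding W_def by (rule Wl_nonneg) (use pi_props in auto)
      have a: "0 \<le> Ex n p (Aev U)" "Ex n p (Aev U) \<le> 1" using Aev_range[OF pr] by auto
      have qj: "0 \<le> 1 - q j" using q_range[OF j(1)] by simp
      have "Ex n p (Aev U) * W U \<le> Ex n p (Aev U) * (1 + (1 - q j) * W ?U)"
        using ex a by (intro mult_left_mono) auto
      also have "\<dots> = Ex n p (Aev U) + Ex n p (Aev ?U) * W ?U" unfolding ind by (simp add: algebra_simps)
      also have "\<dots> \<le> 1 + Ex n p (Aev ?U) * W ?U" using a by simp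
      also have "\<dots> \<le> Ex n p ?G" by (rule low)
      finally show ?thesis .
    qed
  qed
qed

fun Rl :: "nat list \<Rightarrow> (nat \<Rightarrow> bool) \<Rightarrow> nat" where
  "Rl [] x = 0"
| "Rl (a # xs) x = Suc (if sat a x then 0 else Rl xs x)"

lemma p0r: "\<And>i. i < n \<Longrightarrow> 0 \<le> p0 i \<and> p0 i \<le> 1"
  using p0_range by (simp add: less_imp_le)

lemma Rl_Ex:
  "distinct xs \<Longrightarrow> set xs \<subseteq> {..<m} \<Longrightarrow> set xs \<inter> U = {} \<Longrightarrow> U \<subseteq> {..<m} \<Longrightarrow>
   Ex n p0 (\<lambda>x. Aev U x * real (Rl xs x)) = Ex n p0 (Aev U) * Wl xs"
proof (induction xs arbitrary: U)
  case Nil then show ?case by (simp add: Ex_def)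
next
  case (Cons a ys)
  have pw: "Aev U x * real (Rl (a # ys) x) = Aev U x + Aev (insert a U) x * real (Rl ys x)" for x
    unfolding Aev_def by auto
  have a: "a < m" "a \<notin> U" using Cons.prems by auto
  have "Ex n p0 (\<lambda>x. Aev U x * real (Rl (a # ys) x)) = Ex n p0 (Aev U) + Ex n p0 (\<lambda>x. Aev (insert a U) x * real (Rl ys x))"
    unfolding pw Ex_add ..
  also have "Ex n p0 (\<lambda>x. Aev (insert a U) x * real (Rl ys x)) = Ex n p0 (Aev (insert a U)) * Wl ys"
    using Cons by (intro Cons.IH) auto
  also have "Ex n p0 (Aev (insert a U)) = Ex n p0 (Aev U) * (1 - q a)"
    by (rule Aev_indep[OF a Cons.prems(4)]) simp
  finally show ?case by (simp add: algebra_simps)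
qed

lemma Rl_prop: "(\<exists>a\<in>set (take (Rl xs x) xs). sat a x) \<or> Rl xs x = length xs"
  by (induction xs) auto

definition L :: "nat \<Rightarrow> nat list" where "L j = sorted_list_of_set (T j)"

definition \<sigma> :: "nat list" where "\<sigma> = concat (map L \<pi>)"

lemma L_props: "j < m \<Longrightarrow> length (L j) = k \<and> set (L j) = T j"
  unfolding L_def using T_fin cardT by auto

lemma take_concat: "(\<forall>a\<in>set xs. length (L a) = k) \<Longrightarrow>
  take (k * r) (concat (map L xs)) = concat (map L (take r xs))"
proof (induction xs arbitrary: r)
  case Nil then show ?case by simp
next
  case (Cons a xs)
  show ?case
  proof (cases r)
    case 0 then show ?thesis by simp
  next
    case (Suc r')
    have "take (k * r) (concat (map L (a # xs))) = take (k + k * r') (L a @ concat (map L xs))"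
      using Suc by simp
    also have "\<dots> = L a @ take (k * r') (concat (map L xs))" using Cons.prems by simp
    finally show ?thesis using Cons Suc by simp
  qed
qed

lemma length_concat_L: "(\<forall>a\<in>set xs. length (L a) = k) \<Longrightarrow> length (concat (map L xs)) = k * length xs"
  by (induction xs) auto

lemma set_sigma: "set \<sigma> = {..<n}"
proof -
  have "set \<sigma> = (\<Union>j\<in>set \<pi>. set (L j))" unfolding \<sigma>_def by simp
  also have "\<dots> = (\<Union>j<m. T j)" using pi_props L_props by auto
  finally show ?thesis using union by simp
qed

lemma len_sigma: "length \<sigma> = n"
  unfolding \<sigma>_def using length_concat_L[of \<pi>] pi_props L_props n_eq
  by (simp add: distinct_card[symmetric])

lemma perm_sigma: "is_perm n \<sigma>"
  unfolding is_perm_def using set_sigma len_sigma by (simp add: card_distinct)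

lemma stop_le: "x \<in> cube n \<Longrightarrow> stop_time n F \<sigma> x \<le> k * Rl \<pi> x"
proof -
  assume x: "x \<in> cube n"
  have Lk: "\<forall>a\<in>set \<pi>. length (L a) = k" using pi_props L_props by auto
  have tk: "set (take (k * Rl \<pi> x) \<sigma>) = (\<Union>j\<in>set (take (Rl \<pi> x) \<pi>). T j)"
  proof -
    have "set (take (k * Rl \<pi> x) \<sigma>) = set (concat (map L (take (Rl \<pi> x) \<pi>)))"
      unfolding \<sigma>_def using take_concat[OF Lk] by simp
    also have "\<dots> = (\<Union>j\<in>set (take (Rl \<pi> x) \<pi>). set (L j))" by simp
    also have "\<dots> = (\<Union>j\<in>set (take (Rl \<pi> x) \<pi>). T j)"
    proof (rule SUP_cong[OF refl])
      fix j assume "j \<in> set (take (Rl \<pi> x) \<pi>)"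
      hence "j \<in> set \<pi>" by (rule in_set_takeD)
      thus "set (L j) = T j" using pi_props(2) L_props by simp
    qed
    finally show ?thesis .
  qed
  have "determined n F (set (take (k * Rl \<pi> x) \<sigma>)) x"
  proof (cases "\<exists>a\<in>set (take (Rl \<pi> x) \<pi>). sat a x")
    case True
    then obtain a where a: "a \<in> set (take (Rl \<pi> x) \<pi>)" "sat a x" by blast
    have "a \<in> set \<pi>" by (rule in_set_takeD[OF a(1)])
    hence am: "a < m" using pi_props(2) by simp
    have sub: "T a \<subseteq> set (take (k * Rl \<pi> x) \<sigma>)" unfolding tk using a(1) by auto
    show ?thesis unfolding determined_def
    proof (intro ballI impI)
      fix x' assume "x' \<in> cube n" "\<forall>i\<in>set (take (k * Rl \<pi> x) \<sigma>). x' i = x i"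
      hence "sat a x'" using a(2) sub unfolding sat_def by auto
      thus "F x' = F x" using a(2) am unfolding read_once_dnf_def sat_def by auto
    qed
  next
    case False
    hence "Rl \<pi> x = length \<pi>" using Rl_prop[of \<pi> x] by blast
    have lpi: "length \<pi> = m" using distinct_card[OF pi_props(1)] pi_props(2) by simp
    have "take (k * Rl \<pi> x) \<sigma> = \<sigma>"
      using \<open>Rl \<pi> x = length \<pi>\<close> lpi len_sigma n_eq by (simp add: mult.commute)
    thus ?thesis unfolding determined_def set_sigma
    proof (intro ballI impI)
      fix x' assume "x' \<in> cube n" "\<forall>i\<in>set (take (k * Rl \<pi> x) \<sigma>). x' i = x i"
      hence "x' = x" using cube_eq[OF x, of x'] \<open>take (k * Rl \<pi> x) \<sigma> = \<sigma>\<close> set_sigma by simp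
      thus "F x' = F x" by simp
    qed
  qed
  thus ?thesis unfolding stop_time_def by (rule Least_le)
qed

lemma perm_upper: "perm_cost n F (\<lambda>_. 1) p0 \<sigma> \<le> real k * Wl \<pi>"
proof -
  have "perm_cost n F (\<lambda>_. 1) p0 \<sigma> = Ex n p0 (\<lambda>x. real (length (take (stop_time n F \<sigma> x) \<sigma>)))"
    unfolding perm_cost_def Ex_def sum_list_ones ..
  also have "\<dots> \<le> Ex n p0 (\<lambda>x. real k * (Aev {} x * real (Rl \<pi> x)))"
  proof (rule Ex_mono[OF p0r])
    fix x assume x: "x \<in> cube n"
    have "length (take (stop_time n F \<sigma> x) \<sigma>) \<le> k * Rl \<pi> x" using stop_le[OF x] by simp
    thus "real (length (take (stop_time n F \<sigma> x) \<sigma>)) \<le> real k * (Aev {} x * real (Rl \<pi> x))"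
      unfolding Aev_def by (simp add: of_nat_mult[symmetric] del: of_nat_mult)
  qed
  also have "\<dots> = real k * (Ex n p0 (Aev {}) * Wl \<pi>)"
    unfolding Ex_cmult using pi_props by (subst Rl_Ex) auto
  also have "Ex n p0 (Aev {}) = 1" unfolding Aev_def by (simp add: Ex_one)
  finally show ?thesis by simp
qed

lemma tree_lower: "valid_tree n F tr \<Longrightarrow> Wl \<pi> \<le> tree_cost n (\<lambda>_. 1) p0 tr"
proof -
  assume v: "valid_tree n F tr"
  have "Ex n p0 (Aev {}) * W {} \<le> Ex n p0 (\<lambda>x. real (card (tt (tested tr x) - {})))"
    by (rule main) (use p0r v in \<open>auto simp: valid_tree_def\<close>)
  also have "\<dots> \<le> Ex n p0 (\<lambda>x. real (length (tested tr x)))"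
  proof (rule Ex_mono[OF p0r])
    fix x assume "x \<in> cube n"
    hence "set (tested tr x) \<subseteq> {..<n}" using v unfolding valid_tree_def by auto
    thus "real (card (tt (tested tr x) - {})) \<le> real (length (tested tr x))" using card_tt by simp
  qed
  also have "\<dots> = tree_cost n (\<lambda>_. 1) p0 tr" unfolding tree_cost_def Ex_def sum_list_ones ..
  finally show ?thesis unfolding W_def Aev_def by (simp add: Ex_one)
qed

lemma valid_full: "valid_tree n F (fulltree [0..<n])"
  unfolding valid_tree_def
proof
  fix x assume x: "x \<in> cube n"
  show "set (tested (fulltree [0..<n]) x) \<subseteq> {..<n} \<and> determined n F (set (tested (fulltree [0..<n]) x)) x"
    unfolding tested_fulltree determined_def
  proof (intro conjI ballI impI)
    show "set [0..<n] \<subseteq> {..<n}" by auto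
    fix x' assume x': "x' \<in> cube n" "\<forall>i\<in>set [0..<n]. x' i = x i"
    have "x' = x" by (rule cube_eq[OF x x'(1)]) (use x'(2) in auto)
    thus "F x' = F x" by simp
  qed
qed

theorem final: "\<exists>\<sigma>. is_perm n \<sigma> \<and> perm_cost n F (\<lambda>_. 1) p0 \<sigma> \<le> real k * OPT_A n F (\<lambda>_. 1) p0"
proof (intro exI conjI)
  show "is_perm n \<sigma>" by (rule perm_sigma)
  have "Wl \<pi> \<le> OPT_A n F (\<lambda>_. 1) p0"
    unfolding OPT_A_def
  proof (rule cInf_greatest)
    show "{tree_cost n (\<lambda>_. 1) p0 T |T. valid_tree n F T} \<noteq> {}" using valid_full by blast
  qed (use tree_lower in blast)
  hence "real k * Wl \<pi> \<le> real k * OPT_A n F (\<lambda>_. 1) p0" by (intro mult_left_mono) auto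
  thus "perm_cost n F (\<lambda>_. 1) p0 \<sigma> \<le> real k * OPT_A n F (\<lambda>_. 1) p0" using perm_upper by linarith
qed

end


theorem lemma1:
  fixes n m k :: nat and T :: "nat \<Rightarrow> nat set" and p :: "nat \<Rightarrow> real"
  assumes "m > 0" and "n = m * k"
    and "\<And>j. j < m \<Longrightarrow> card (T j) = k"
    and "\<And>j j'. j < m \<Longrightarrow> j' < m \<Longrightarrow> j \<noteq> j' \<Longrightarrow> T j \<inter> T j' = {}"
    and "(\<Union>j<m. T j) = {..<n}"
    and "\<And>i. i < n \<Longrightarrow> 0 < p i \<and> p i < 1"
  shows "\<exists>\<sigma>. is_perm n \<sigma> \<and>
           perm_cost n (read_once_dnf n m T) (\<lambda>_. 1) p \<sigma>
             \<le> real k * OPT_A n (read_once_dnf n m T) (\<lambda>_. 1) p"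
proof (cases "k = 0")
  case True
  hence n0: "n = 0" using assms(2) by simp
  show ?thesis
    by (rule exI[of _ "[]"]) (simp add: is_perm_def perm_cost_def True n0)
next
  case False
  interpret sb n m k T p
    by unfold_locales (use assms False in auto)
  show ?thesis using final by simp
qed

end
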